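(* Let $G$ be the infinite strong grid with vertex set $\mathbb{Z}^2$, where $(i_1,j_1)$ and $(i_2,j_2)$ are adjacent iff $\max\{|i_1-i_2|,|j_1-j_2|\}=1$. Let $L=\{k(2,1)+l(-1,3): k,l\in\mathbb{Z}\}$ and $L'=\{k(1,3)+l(2,-1): k,l\in\mathbb{Z}\}$ (both subgroups of $\mathbb{Z}^2$ of index $7$). Then: (1) if guards occupy exactly the vertices of a translate $p+L$ ($p\in\mathbb{Z}^2$), then for every vertex $v\in\mathbb{Z}^2$ there is a translate $q+L'$ with $v\in q+L'$ and a bijection $f:p+L\to q+L'$ such that for every $x\in p+L$ either $f(x)=x$ or $f(x)$ is adjacent to $x$; (2) symmetrically, if guards occupy exactly a translate $p'+L'$, then for every vertex $v$ there is a translate $q'+L$ containing $v$ and a bijection $f:p'+L'\to q'+L$ with each $f(x)$ equal or adjacent to $x$. Consequently, starting from guards on a translate of $L$ (one guard per vertex), the guards can respond to every infinite sequence of attacks in the all-guards-move eternal domination game on $G$, always keeping at most one guard per vertex, occupying each attacked vertex, and alternating between translates of $L$ and translates of $L'$ (each of which is a dominating set of $G$); i.e. they eternally dominate $G$.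
   Context: Eternal domination game (all-guards-move model): guards are placed on distinct vertices of a graph forming a dominating set; at each turn an attacker chooses a vertex, and then every guard may stay in place or move to an adjacent vertex, with no two guards ending on the same vertex, and some guard must end on the attacked vertex. The guards eternally dominate the graph if they can do so, maintaining a dominating set, against every infinite sequence of attacks. *)

theory Defs
  imports Main
begin

type_synonym vtx = "int \<times> int"

definition strong_adj :: "vtx \<Rightarrow> vtx \<Rightarrow> bool" where
  "strong_adj u v \<longleftrightarrow> max \<bar>fst u - fst v\<bar> \<bar>snd u - snd v\<bar> = 1"

definition latL :: "vtx set" where
  "latL = {(2*k + l*(-1), k + 3*l) | k l. True}"

definition latL' :: "vtx set" where
  "latL' = {(k + 2*l, 3*k + l*(-1)) | k l. True}"

definition translate :: "vtx \<Rightarrow> vtx set \<Rightarrow> vtx set" where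
  "translate p A = {(fst p + fst a, snd p + snd a) | a. a \<in> A}"

definition dominating :: "('a \<Rightarrow> 'a \<Rightarrow> bool) \<Rightarrow> 'a set \<Rightarrow> bool" where
  "dominating adj D \<longleftrightarrow> (\<forall>v. v \<in> D \<or> (\<exists>u\<in>D. adj u v))"

definition guard_move :: "('a \<Rightarrow> 'a \<Rightarrow> bool) \<Rightarrow> 'a set \<Rightarrow> 'a set \<Rightarrow> ('a \<Rightarrow> 'a) \<Rightarrow> bool" where
  "guard_move adj D D' f \<longleftrightarrow> bij_betw f D D' \<and> (\<forall>x\<in>D. f x = x \<or> adj x (f x))"

text \<open>A (history-dependent) guard strategy: sigma maps the finite sequence of attacks so far
  to the current guard configuration.\<close>
definition eternal_strategy :: "('a \<Rightarrow> 'a \<Rightarrow> bool) \<Rightarrow> 'a set \<Rightarrow> ('a list \<Rightarrow> 'a set) \<Rightarrow> bool" where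
  "eternal_strategy adj D0 \<sigma> \<longleftrightarrow>
     \<sigma> [] = D0 \<and>
     (\<forall>as. dominating adj (\<sigma> as)) \<and>
     (\<forall>as v. v \<in> \<sigma> (as @ [v]) \<and> (\<exists>f. guard_move adj (\<sigma> as) (\<sigma> (as @ [v])) f))"

definition eternally_dominates :: "('a \<Rightarrow> 'a \<Rightarrow> bool) \<Rightarrow> 'a set \<Rightarrow> bool" where
  "eternally_dominates adj D0 \<longleftrightarrow> (\<exists>\<sigma>. eternal_strategy adj D0 \<sigma>)"

end

theory Submission
  imports Defs
begin

definition dxf :: "int \<Rightarrow> int" where
  "dxf r = (if r = 1 \<or> r = 2 then 1 else if r = 5 \<or> r = 6 then -1 else 0)"
definition dyf :: "int \<Rightarrow> int" where
  "dyf r = (if r = 0 then 0 else if r = 1 \<or> r = 3 \<or> r = 5 then 1 else -1)"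

definition FF :: "vtx \<Rightarrow> vtx \<Rightarrow> vtx" where
  "FF b z = (fst z + dxf ((snd z - snd b) mod 7), snd z + dyf ((snd z - snd b) mod 7))"
definition GG :: "vtx \<Rightarrow> vtx \<Rightarrow> vtx" where
  "GG b z = (fst z - dxf ((snd z - snd b) mod 7), snd z + dyf ((snd z - snd b) mod 7))"

lemma mod7_cases:
  fixes Y :: int
  obtains "Y mod 7 = 0" | "Y mod 7 = 1" | "Y mod 7 = 2" | "Y mod 7 = 3" | "Y mod 7 = 4"
    | "Y mod 7 = 5" | "Y mod 7 = 6"
proof -
  have "Y mod 7 = 0 \<or> Y mod 7 = 1 \<or> Y mod 7 = 2 \<or> Y mod 7 = 3 \<or> Y mod 7 = 4 \<or> Y mod 7 = 5 \<or> Y mod 7 = 6" by presburger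
  then show ?thesis by (elim disjE) (erule that)+
qed

lemma key_perm:
  fixes Y :: int
  shows "dxf ((Y + dyf (Y mod 7)) mod 7) = dxf (Y mod 7) \<and>
         dyf ((Y + dyf (Y mod 7)) mod 7) = - dyf (Y mod 7)"
proof (cases rule: mod7_cases[of Y])
  case 1 then show ?thesis by (simp add: dxf_def dyf_def)
next
  case 2 then have "(Y+1) mod 7 = 2" by presburger
  with 2 show ?thesis by (simp add: dxf_def dyf_def)
next
  case 3 then have "(Y-1) mod 7 = 1" by presburger
  with 3 show ?thesis by (simp add: dxf_def dyf_def)
next
  case 4 then have "(Y+1) mod 7 = 4" by presburger
  with 4 show ?thesis by (simp add: dxf_def dyf_def)
next
  case 5 then have "(Y-1) mod 7 = 3" by presburger
  with 5 show ?thesis by (simp add: dxf_def dyf_def)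
next
  case 6 then have "(Y+1) mod 7 = 6" by presburger
  with 6 show ?thesis by (simp add: dxf_def dyf_def)
next
  case 7 then have "(Y-1) mod 7 = 5" by presburger
  with 7 show ?thesis by (simp add: dxf_def dyf_def)
qed

lemma memL: "z \<in> translate q latL \<longleftrightarrow> 7 dvd ((fst z - fst q) - 2*(snd z - snd q))"
proof
  assume "z \<in> translate q latL"
  then obtain k l where "z = (fst q + (2*k + l*(-1)), snd q + (k + 3*l))"
    unfolding translate_def latL_def by auto
  then show "7 dvd ((fst z - fst q) - 2*(snd z - snd q))" by simp
next
  assume "7 dvd ((fst z - fst q) - 2*(snd z - snd q))"
  then obtain m where m: "(fst z - fst q) - 2*(snd z - snd q) = 7*m" by blast
  let ?l = "-m" let ?k = "(snd z - snd q) + 3*m"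
  have "(fst z - fst q, snd z - snd q) = (2*?k + ?l*(-1), ?k + 3*?l)" using m by auto
  then have "(fst z - fst q, snd z - snd q) \<in> latL" unfolding latL_def by blast
  then show "z \<in> translate q latL" unfolding translate_def
    by (intro CollectI exI[of _ "(fst z - fst q, snd z - snd q)"]) auto
qed

lemma memL': "z \<in> translate q latL' \<longleftrightarrow> 7 dvd ((fst z - fst q) + 2*(snd z - snd q))"
proof
  assume "z \<in> translate q latL'"
  then obtain k l where "z = (fst q + (k + 2*l), snd q + (3*k + l*(-1)))"
    unfolding translate_def latL'_def by auto
  then show "7 dvd ((fst z - fst q) + 2*(snd z - snd q))" by simp
next
  assume "7 dvd ((fst z - fst q) + 2*(snd z - snd q))"
  then obtain m where m: "(fst z - fst q) + 2*(snd z - snd q) = 7*m" by blast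
  let ?k = "m" let ?l = "3*m - (snd z - snd q)"
  have "(fst z - fst q, snd z - snd q) = (?k + 2*?l, 3*?k + ?l*(-1))" using m by auto
  then have "(fst z - fst q, snd z - snd q) \<in> latL'" unfolding latL'_def by blast
  then show "z \<in> translate q latL'" unfolding translate_def
    by (intro CollectI exI[of _ "(fst z - fst q, snd z - snd q)"]) auto
qed

lemma FF_mem:
  fixes X Y :: int
  assumes "7 dvd (X - 2*Y)"
  shows "7 dvd (X + dxf (Y mod 7) + 2*(Y + dyf (Y mod 7)))"
  using assms by (cases rule: mod7_cases[of Y]) (simp_all add: dxf_def dyf_def; presburger)+

lemma GG_mem:
  fixes X Y :: int
  assumes "7 dvd (X + 2*Y)"
  shows "7 dvd (X - dxf (Y mod 7) - 2*(Y + dyf (Y mod 7)))"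
  using assms by (cases rule: mod7_cases[of Y]) (simp_all add: dxf_def dyf_def; presburger)+

lemma adj_small:
  fixes r :: int
  shows "(dxf r = 0 \<and> dyf r = 0) \<or> max \<bar>dxf r\<bar> \<bar>dyf r\<bar> = 1"
  by (simp add: dxf_def dyf_def)

lemma FF_in: "z \<in> translate b latL \<Longrightarrow> FF b z \<in> translate b latL'"
  unfolding memL memL' FF_def
  using FF_mem[of "fst z - fst b" "snd z - snd b"] by (simp add: algebra_simps)

lemma GG_in: "z \<in> translate b latL' \<Longrightarrow> GG b z \<in> translate b latL"
  unfolding memL memL' GG_def
  using GG_mem[of "fst z - fst b" "snd z - snd b"] by (simp add: algebra_simps)

lemma GG_FF: "GG b (FF b z) = z"
proof -
  have e: "snd z + dyf ((snd z - snd b) mod 7) - snd b = (snd z - snd b) + dyf ((snd z - snd b) mod 7)"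
    by simp
  show ?thesis unfolding GG_def FF_def using key_perm[of "snd z - snd b"]
    by (simp only: fst_conv snd_conv e) simp
qed

lemma FF_GG: "FF b (GG b z) = z"
proof -
  have e: "snd z + dyf ((snd z - snd b) mod 7) - snd b = (snd z - snd b) + dyf ((snd z - snd b) mod 7)"
    by simp
  show ?thesis unfolding GG_def FF_def using key_perm[of "snd z - snd b"]
    by (simp only: fst_conv snd_conv e) simp
qed

lemma FF_adj: "FF b z = z \<or> strong_adj z (FF b z)"
  using adj_small[of "(snd z - snd b) mod 7"]
  by (auto simp: FF_def strong_adj_def prod_eq_iff)

lemma GG_adj: "GG b z = z \<or> strong_adj z (GG b z)"
  using adj_small[of "(snd z - snd b) mod 7"]
  by (auto simp: GG_def strong_adj_def prod_eq_iff)

definition stepL :: "vtx \<Rightarrow> vtx \<Rightarrow> vtx" where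
  "stepL p v = (fst p + 4*(fst v - fst p) + 8*(snd v - snd p), snd p + 2*(fst v - fst p) + 4*(snd v - snd p))"
definition stepL' :: "vtx \<Rightarrow> vtx \<Rightarrow> vtx" where
  "stepL' p v = (fst p - 3*(fst v - fst p) - 8*(snd v - snd p), snd p - 2*(fst v - fst p) - 3*(snd v - snd p))"

lemma eqL: "translate p latL = translate (stepL p v) latL"
proof (rule set_eqI)
  fix z
  have "(fst z - fst (stepL p v)) - 2*(snd z - snd (stepL p v)) = (fst z - fst p) - 2*(snd z - snd p)"
    by (simp add: stepL_def algebra_simps)
  then show "z \<in> translate p latL \<longleftrightarrow> z \<in> translate (stepL p v) latL"
    by (simp only: memL)
qed

lemma vL: "v \<in> translate (stepL p v) latL'"
proof -
  have "(fst v - fst (stepL p v)) + 2*(snd v - snd (stepL p v)) = 7 * (- (fst v - fst p) - 2*(snd v - snd p))"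
    by (simp add: stepL_def algebra_simps)
  then show ?thesis by (simp only: memL') simp
qed

lemma eqL': "translate p latL' = translate (stepL' p v) latL'"
proof (rule set_eqI)
  fix z
  have "(fst z - fst (stepL' p v)) + 2*(snd z - snd (stepL' p v)) = ((fst z - fst p) + 2*(snd z - snd p)) + 7 * ((fst v - fst p) + 2*(snd v - snd p))"
    by (simp add: stepL'_def algebra_simps)
  then show "z \<in> translate p latL' \<longleftrightarrow> z \<in> translate (stepL' p v) latL'"
    by (simp only: memL') (metis dvd_add_left_iff dvd_triv_left)
qed

lemma vL': "v \<in> translate (stepL' p v) latL"
proof -
  have "(fst v - fst (stepL' p v)) - 2*(snd v - snd (stepL' p v)) = 0"
    by (simp add: stepL'_def algebra_simps)
  then show ?thesis by (simp add: memL)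
qed

lemma bijF: "bij_betw (FF b) (translate b latL) (translate b latL')"
  by (rule bij_betw_byWitness[where f'="GG b"]) (auto simp: GG_FF FF_GG FF_in GG_in)
lemma bijG: "bij_betw (GG b) (translate b latL') (translate b latL)"
  by (rule bij_betw_byWitness[where f'="FF b"]) (auto simp: GG_FF FF_GG FF_in GG_in)

lemma moveL: "v \<in> translate (stepL p v) latL' \<and>
  guard_move strong_adj (translate p latL) (translate (stepL p v) latL') (FF (stepL p v))"
  unfolding guard_move_def eqL[of p v, symmetric]
  using vL bijF[of "stepL p v"] FF_adj eqL[of p v] by metis

lemma moveL': "v \<in> translate (stepL' p v) latL \<and>
  guard_move strong_adj (translate p latL') (translate (stepL' p v) latL) (GG (stepL' p v))"
  unfolding guard_move_def
  using vL' bijG[of "stepL' p v"] GG_adj eqL'[of p v] by metis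

lemma move_dom:
  assumes "guard_move adj D D' f" "v \<in> D'"
  shows "v \<in> D \<or> (\<exists>u\<in>D. adj u v)"
proof -
  from assms(1) have b: "bij_betw f D D'" and a: "\<forall>x\<in>D. f x = x \<or> adj x (f x)"
    unfolding guard_move_def by auto
  from b assms(2) obtain x where x: "x \<in> D" "f x = v"
    by (metis bij_betw_def imageE)
  with a show ?thesis by metis
qed

lemma domL: "dominating strong_adj (translate b latL)"
  unfolding dominating_def using moveL move_dom by metis

lemma domL': "dominating strong_adj (translate b latL')"
  unfolding dominating_def using moveL' move_dom by metis

fun bse :: "vtx \<Rightarrow> vtx list \<Rightarrow> vtx" where
  "bse p [] = p"
| "bse p (v # rs) = (if even (length rs) then stepL (bse p rs) v else stepL' (bse p rs) v)"

definition sig :: "vtx \<Rightarrow> vtx list \<Rightarrow> vtx set" where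
  "sig p as = (if even (length as) then translate (bse p (rev as)) latL
               else translate (bse p (rev as)) latL')"

lemma sig_strategy: "eternal_strategy strong_adj (translate p latL) (sig p)"
proof -
  have 1: "sig p [] = translate p latL" by (simp add: sig_def)
  have 2: "\<forall>as. dominating strong_adj (sig p as)"
    by (simp add: sig_def domL domL')
  have 3: "v \<in> sig p (as @ [v]) \<and> (\<exists>f. guard_move strong_adj (sig p as) (sig p (as @ [v])) f)"
    for as v
  proof (cases "even (length as)")
    case True
    then show ?thesis using moveL[of v "bse p (rev as)"] by (auto simp: sig_def)
  next
    case False
    then show ?thesis using moveL'[of v "bse p (rev as)"] by (auto simp: sig_def)
  qed
  show ?thesis unfolding eternal_strategy_def using 1 2 3 by blast
qed

theorem mainTheorem1:
  shows "(\<forall>p v. \<exists>q f. v \<in> translate q latL' \<and>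
            guard_move strong_adj (translate p latL) (translate q latL') f)
    \<and> (\<forall>p v. \<exists>q f. v \<in> translate q latL \<and>
            guard_move strong_adj (translate p latL') (translate q latL) f)
    \<and> (\<forall>p. \<exists>\<sigma>. eternal_strategy strong_adj (translate p latL) \<sigma> \<and>
            (\<forall>as. (even (length as) \<longrightarrow> (\<exists>q. \<sigma> as = translate q latL)) \<and>
                  (odd (length as) \<longrightarrow> (\<exists>q. \<sigma> as = translate q latL'))))
    \<and> (\<forall>p. eternally_dominates strong_adj (translate p latL))"
proof (intro conjI allI)
  fix p v show "\<exists>q f. v \<in> translate q latL' \<and>
            guard_move strong_adj (translate p latL) (translate q latL') f"
    using moveL by blast
next
  fix p v show "\<exists>q f. v \<in> translate q latL \<and>
            guard_move strong_adj (translate p latL') (translate q latL) f"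
    using moveL' by blast
next
  fix p show "\<exists>\<sigma>. eternal_strategy strong_adj (translate p latL) \<sigma> \<and>
            (\<forall>as. (even (length as) \<longrightarrow> (\<exists>q. \<sigma> as = translate q latL)) \<and>
                  (odd (length as) \<longrightarrow> (\<exists>q. \<sigma> as = translate q latL')))"
  proof (rule exI[of _ "sig p"], intro conjI allI impI)
    show "eternal_strategy strong_adj (translate p latL) (sig p)" by (rule sig_strategy)
  next
    fix as :: "vtx list" assume "even (length as)"
    then show "\<exists>q. sig p as = translate q latL" unfolding sig_def by (intro exI[of _ "bse p (rev as)"]) simp
  next
    fix as :: "vtx list" assume "odd (length as)"
    then show "\<exists>q. sig p as = translate q latL'" unfolding sig_def by (intro exI[of _ "bse p (rev as)"]) simp
  qed
next
  fix p show "eternally_dominates strong_adj (translate p latL)"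
    unfolding eternally_dominates_def using sig_strategy by blast
qed

end
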